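(* Let $G$ be a finite group and let $U_1,U_2\le G$ be almost conjugate. Suppose there exists a normal subgroup $N\trianglelefteq G$ containing both $U_1$ and $U_2$ as subgroups of index two. Then $U_1$ is conjugate to $U_2$ in $G$.
   Context: Two subgroups $U_1,U_2$ of a finite group $G$ are almost conjugate if for every conjugacy class $C$ of $G$ one has $|U_1\cap C|=|U_2\cap C|$. *)

theory Defs
  imports "HOL-Algebra.Algebra"
begin

definition conj_class :: "('a, 'b) monoid_scheme \<Rightarrow> 'a \<Rightarrow> 'a set" where
  "conj_class G x = {g \<otimes>\<^bsub>G\<^esub> x \<otimes>\<^bsub>G\<^esub> inv\<^bsub>G\<^esub> g | g. g \<in> carrier G}"

definition conj_classes :: "('a, 'b) monoid_scheme \<Rightarrow> 'a set set" where
  "conj_classes G = conj_class G ` carrier G"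

definition almost_conjugate :: "('a, 'b) monoid_scheme \<Rightarrow> 'a set \<Rightarrow> 'a set \<Rightarrow> bool" where
  "almost_conjugate G U1 U2 \<longleftrightarrow> (\<forall>C \<in> conj_classes G. card (U1 \<inter> C) = card (U2 \<inter> C))"

definition conjugate_subgroups :: "('a, 'b) monoid_scheme \<Rightarrow> 'a set \<Rightarrow> 'a set \<Rightarrow> bool" where
  "conjugate_subgroups G U1 U2 \<longleftrightarrow>
     (\<exists>g \<in> carrier G. U2 = (\<lambda>u. g \<otimes>\<^bsub>G\<^esub> u \<otimes>\<^bsub>G\<^esub> inv\<^bsub>G\<^esub> g) ` U1)"

end

theory Submission
  imports Defs
begin

lemma card_swap_count:
  assumes "finite A" "finite B"
  shows "(\<Sum>x\<in>A. card {g\<in>B. P g x}) = (\<Sum>g\<in>B. card {x\<in>A. P g x})"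
proof -
  have "(\<Sum>x\<in>A. card {g\<in>B. P g x}) = (\<Sum>x\<in>A. \<Sum>g\<in>B. if P g x then 1 else 0)"
    using assms by (simp add: sum.inter_filter[symmetric])
  also have "\<dots> = (\<Sum>g\<in>B. \<Sum>x\<in>A. if P g x then 1 else 0)"
    by (rule sum.swap)
  also have "\<dots> = (\<Sum>g\<in>B. card {x\<in>A. P g x})"
    using assms by (simp add: sum.inter_filter[symmetric])
  finally show ?thesis .
qed

lemma in_two: "x \<in> {a, c} \<Longrightarrow> x = a \<or> x = c"
  by simp

lemma in_UN_sing: "n \<in> (\<Union>h\<in>H. {f h}) \<Longrightarrow> \<exists>h\<in>H. n = f h"
  by simp

lemma two_set_eq: "S = {p, q} \<Longrightarrow> x \<in> S \<Longrightarrow> y \<in> S \<Longrightarrow> x \<noteq> y \<Longrightarrow> S = {x, y}"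
  by auto

context group
begin

lemma gcancel1 [simp]: "x \<in> carrier G \<Longrightarrow> y \<in> carrier G \<Longrightarrow> inv x \<otimes> (x \<otimes> y) = y"
  by (simp add: m_assoc[symmetric])

lemma gcancel2 [simp]: "x \<in> carrier G \<Longrightarrow> y \<in> carrier G \<Longrightarrow> x \<otimes> (inv x \<otimes> y) = y"
  by (simp add: m_assoc[symmetric])

lemma fiber_card:
  assumes x: "x \<in> carrier G" and h: "h \<in> carrier G"
  shows "card {g \<in> carrier G. g \<otimes> x \<otimes> inv g = h \<otimes> x \<otimes> inv h}
       = card {g \<in> carrier G. g \<otimes> x \<otimes> inv g = x}"
proof -
  have "bij_betw (\<lambda>c. h \<otimes> c) {g \<in> carrier G. g \<otimes> x \<otimes> inv g = x}
          {g \<in> carrier G. g \<otimes> x \<otimes> inv g = h \<otimes> x \<otimes> inv h}"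
  proof (rule bij_betw_byWitness[where f' = "\<lambda>g. inv h \<otimes> g"])
    show "\<forall>a\<in>{g \<in> carrier G. g \<otimes> x \<otimes> inv g = x}. inv h \<otimes> (h \<otimes> a) = a"
      using h by (simp add: m_assoc)
    show "\<forall>a\<in>{g \<in> carrier G. g \<otimes> x \<otimes> inv g = h \<otimes> x \<otimes> inv h}. h \<otimes> (inv h \<otimes> a) = a"
      using h by (simp add: m_assoc)
    show "(\<lambda>c. h \<otimes> c) ` {g \<in> carrier G. g \<otimes> x \<otimes> inv g = x}
          \<subseteq> {g \<in> carrier G. g \<otimes> x \<otimes> inv g = h \<otimes> x \<otimes> inv h}"
    proof safe
      fix c assume c: "c \<in> carrier G" "c \<otimes> x \<otimes> inv c = x"
      have "h \<otimes> c \<otimes> x \<otimes> inv (h \<otimes> c) = h \<otimes> (c \<otimes> x \<otimes> inv c) \<otimes> inv h"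
        using c(1) h x by (simp add: inv_mult_group m_assoc)
      then show "h \<otimes> c \<otimes> x \<otimes> inv (h \<otimes> c) = h \<otimes> x \<otimes> inv h" using c by simp
    qed (use h in auto)
    show "(\<lambda>g. inv h \<otimes> g) ` {g \<in> carrier G. g \<otimes> x \<otimes> inv g = h \<otimes> x \<otimes> inv h}
          \<subseteq> {g \<in> carrier G. g \<otimes> x \<otimes> inv g = x}"
    proof safe
      fix c assume c: "c \<in> carrier G" "c \<otimes> x \<otimes> inv c = h \<otimes> x \<otimes> inv h"
      have "inv h \<otimes> c \<otimes> x \<otimes> inv (inv h \<otimes> c) = inv h \<otimes> (c \<otimes> x \<otimes> inv c) \<otimes> h"
        using c(1) h x by (simp add: inv_mult_group m_assoc)
      also have "\<dots> = x" using c h x by (simp add: m_assoc)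
      finally show "inv h \<otimes> c \<otimes> x \<otimes> inv (inv h \<otimes> c) = x" .
    qed (use h in auto)
  qed
  then show ?thesis by (simp add: bij_betw_same_card)
qed

lemma F_formula:
  assumes fin: "finite (carrier G)" and x: "x \<in> carrier G" and U: "U \<subseteq> carrier G"
  shows "card {g \<in> carrier G. g \<otimes> x \<otimes> inv g \<in> U}
       = card (U \<inter> conj_class G x) * card {g \<in> carrier G. g \<otimes> x \<otimes> inv g = x}"
proof -
  let ?A = "\<lambda>y. {g \<in> carrier G. g \<otimes> x \<otimes> inv g = y}"
  have eq: "{g \<in> carrier G. g \<otimes> x \<otimes> inv g \<in> U} = \<Union>(?A ` (U \<inter> conj_class G x))"
    by (auto simp: conj_class_def)
  have fI: "finite (U \<inter> conj_class G x)" using fin U by (meson finite_Int finite_subset)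
  have "card (\<Union>(?A ` (U \<inter> conj_class G x))) = (\<Sum>y\<in>U \<inter> conj_class G x. card (?A y))"
    by (rule card_UN_disjoint) (use fI fin in auto)
  also have "\<dots> = (\<Sum>y\<in>U \<inter> conj_class G x. card (?A x))"
  proof (rule sum.cong)
    fix y assume "y \<in> U \<inter> conj_class G x"
    then obtain h where h: "h \<in> carrier G" "y = h \<otimes> x \<otimes> inv h" by (auto simp: conj_class_def)
    show "card (?A y) = card (?A x)" using fiber_card[OF x h(1)] h(2) by simp
  qed simp
  finally show ?thesis using eq by simp
qed

definition W :: "'a set \<Rightarrow> 'a \<Rightarrow> 'a set" where
  "W U g = {x \<in> carrier G. g \<otimes> x \<otimes> inv g \<in> U}"

lemma W_card:
  assumes U: "U \<subseteq> carrier G" and g: "g \<in> carrier G"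
  shows "card (W U g) = card U"
proof -
  have "bij_betw (\<lambda>x. g \<otimes> x \<otimes> inv g) (W U g) U"
  proof (rule bij_betw_byWitness[where f' = "\<lambda>u. inv g \<otimes> u \<otimes> g"])
    show "\<forall>a\<in>W U g. inv g \<otimes> (g \<otimes> a \<otimes> inv g) \<otimes> g = a"
      using g by (auto simp: W_def m_assoc)
    show "\<forall>a\<in>U. g \<otimes> (inv g \<otimes> a \<otimes> g) \<otimes> inv g = a"
      using g U by (auto simp: m_assoc)
    show "(\<lambda>x. g \<otimes> x \<otimes> inv g) ` W U g \<subseteq> U" by (auto simp: W_def)
    show "(\<lambda>u. inv g \<otimes> u \<otimes> g) ` U \<subseteq> W U g"
      using g U by (auto simp: W_def m_assoc)
  qed
  then show ?thesis by (simp add: bij_betw_same_card)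
qed

lemma W_subgroup:
  assumes U: "subgroup U G" and g: "g \<in> carrier G"
  shows "subgroup (W U g) G"
proof (rule subgroupI)
  show "W U g \<subseteq> carrier G" by (auto simp: W_def)
  show "W U g \<noteq> {}"
  proof -
    have "\<one> \<in> W U g" using g U by (simp add: W_def subgroup.one_closed)
    then show ?thesis by blast
  qed
  fix a assume a: "a \<in> W U g"
  have "g \<otimes> inv a \<otimes> inv g = inv (g \<otimes> a \<otimes> inv g)"
    using a g by (simp add: W_def inv_mult_group m_assoc)
  then show "inv a \<in> W U g" using a g U by (simp add: W_def subgroup.m_inv_closed)
next
  fix a b assume a: "a \<in> W U g" and b: "b \<in> W U g"
  have "g \<otimes> (a \<otimes> b) \<otimes> inv g = (g \<otimes> a \<otimes> inv g) \<otimes> (g \<otimes> b \<otimes> inv g)"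
    using a b g by (simp add: W_def m_assoc)
  then show "a \<otimes> b \<in> W U g" using a b g U by (simp add: W_def subgroup.m_closed)
qed

lemma W_sub_N:
  assumes N: "N \<lhd> G" and U: "U \<subseteq> N" and g: "g \<in> carrier G"
  shows "W U g \<subseteq> N"
proof
  fix x assume x: "x \<in> W U g"
  have "inv g \<otimes> (g \<otimes> x \<otimes> inv g) \<otimes> inv (inv g) \<in> N"
    by (rule normal.inv_op_closed2[OF N]) (use x U g in \<open>auto simp: W_def\<close>)
  moreover have "inv g \<otimes> (g \<otimes> x \<otimes> inv g) \<otimes> inv (inv g) = x"
    using x g by (simp add: W_def m_assoc)
  ultimately show "x \<in> N" by simp
qed

lemma W_one: "U \<subseteq> carrier G \<Longrightarrow> W U \<one> = U"
  by (auto simp: W_def)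

lemma W_conj:
  assumes U1: "U1 \<subseteq> carrier G" and U2: "U2 \<subseteq> carrier G" and g: "g \<in> carrier G"
    and eq: "W U2 g = U1"
  shows "conjugate_subgroups G U1 U2"
  unfolding conjugate_subgroups_def
proof (intro bexI[OF _ g] equalityI subsetI)
  fix u assume u: "u \<in> U2"
  have uG: "u \<in> carrier G" using u U2 by blast
  have "inv g \<otimes> u \<otimes> g \<in> W U2 g" using uG g u by (simp add: W_def m_assoc)
  moreover have "u = g \<otimes> (inv g \<otimes> u \<otimes> g) \<otimes> inv g" using u g U2 by (auto simp: m_assoc)
  ultimately show "u \<in> (\<lambda>u. g \<otimes> u \<otimes> inv g) ` U1" using eq by blast
next
  fix y assume "y \<in> (\<lambda>u. g \<otimes> u \<otimes> inv g) ` U1"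
  then show "y \<in> U2" using eq by (auto simp: W_def)
qed

lemma key:
  assumes fin: "finite (carrier G)" and N: "N \<lhd> G" and H: "subgroup H G" and HN: "H \<subseteq> N"
    and c2: "card (rcosets\<^bsub>G\<lparr>carrier := N\<rparr>\<^esub> H) = 2"
    and V: "subgroup V G" and VN: "V \<subseteq> N" and nVH: "\<not> V \<subseteq> H"
  shows "card V = 2 * card (V \<inter> H)"
proof -
  obtain b where b: "b \<in> V" "b \<notin> H" using nVH by blast
  have bN: "b \<in> N" using b VN by blast
  have NG: "N \<subseteq> carrier G" using N normal_imp_subgroup subgroup.subset by blast
  have HG: "H \<subseteq> carrier G" using H subgroup.subset by blast
  have VG: "V \<subseteq> carrier G" using V subgroup.subset by blast
  have bG: "b \<in> carrier G" using bN NG by blast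
  let ?R = "rcosets\<^bsub>G\<lparr>carrier := N\<rparr>\<^esub> H"
  have R: "?R = (\<lambda>a. (\<Union>h\<in>H. {h \<otimes> a})) ` N"
    by (auto simp: RCOSETS_def r_coset_def)
  have one: "\<one> \<in> N" using N normal_imp_subgroup subgroup.one_closed by blast
  have "(\<Union>h\<in>H. {h \<otimes> \<one>}) = (\<Union>h\<in>H. {h})"
    by (rule SUP_cong) (use HG in auto)
  then have "(\<Union>h\<in>H. {h \<otimes> \<one>}) = H" by simp
  then have H1: "H \<in> ?R" using R one by (metis image_eqI)
  have Hb: "(\<Union>h\<in>H. {h \<otimes> b}) \<in> ?R" using R bN by blast
  have ne: "(\<Union>h\<in>H. {h \<otimes> b}) \<noteq> H"
  proof -
    have "\<one> \<otimes> b \<in> (\<Union>h\<in>H. {h \<otimes> b})" using H subgroup.one_closed by blast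
    moreover have "\<one> \<otimes> b = b" using bG by simp
    ultimately have "b \<in> (\<Union>h\<in>H. {h \<otimes> b})" by simp
    then show ?thesis using b(2) by blast
  qed
  have Req: "?R = {H, (\<Union>h\<in>H. {h \<otimes> b})}"
  proof -
    obtain p q where pq: "?R = {p, q}" "p \<noteq> q" using c2 card_2_iff by metis
    show ?thesis by (rule two_set_eq[OF pq(1) H1 Hb ne[symmetric]])
  qed
  have split: "n \<in> H \<or> (\<exists>h\<in>H. n = h \<otimes> b)" if n: "n \<in> N" for n
  proof -
    have "(\<Union>h\<in>H. {h \<otimes> n}) \<in> ?R" using R n by blast
    moreover have "n \<in> (\<Union>h\<in>H. {h \<otimes> n})"
    proof -
      have "\<one> \<otimes> n \<in> (\<Union>h\<in>H. {h \<otimes> n})" using H subgroup.one_closed by blast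
      moreover have "\<one> \<otimes> n = n" using n NG by auto
      ultimately show ?thesis by simp
    qed
    ultimately have mem: "(\<Union>h\<in>H. {h \<otimes> n}) \<in> {H, (\<Union>h\<in>H. {h \<otimes> b})}"
      and nin: "n \<in> (\<Union>h\<in>H. {h \<otimes> n})" using Req by simp_all
    from in_two[OF mem] show ?thesis
    proof
      assume "(\<Union>h\<in>H. {h \<otimes> n}) = H"
      then show ?thesis using nin by simp
    next
      assume "(\<Union>h\<in>H. {h \<otimes> n}) = (\<Union>h\<in>H. {h \<otimes> b})"
      then have "n \<in> (\<Union>h\<in>H. {h \<otimes> b})" using nin by simp
      then show ?thesis using in_UN_sing by blast
    qed
  qed
  have Veq: "V = (V \<inter> H) \<union> (\<lambda>x. x \<otimes> b) ` (V \<inter> H)"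
  proof (intro equalityI subsetI)
    fix v assume v: "v \<in> V"
    show "v \<in> (V \<inter> H) \<union> (\<lambda>x. x \<otimes> b) ` (V \<inter> H)"
    proof (cases "v \<in> H")
      case True then show ?thesis using v by blast
    next
      case False
      then obtain h where h: "h \<in> H" "v = h \<otimes> b" using split v VN by blast
      have hG: "h \<in> carrier G" using h HG by blast
      have "h = v \<otimes> inv b" using h(2) hG bG by (simp add: m_assoc)
      then have "h \<in> V" using v b V by (simp add: subgroup.m_closed subgroup.m_inv_closed)
      then show ?thesis using h by blast
    qed
  next
    fix v assume "v \<in> (V \<inter> H) \<union> (\<lambda>x. x \<otimes> b) ` (V \<inter> H)"
    then show "v \<in> V" using b V by (auto simp: subgroup.m_closed)
  qed
  have disj: "(V \<inter> H) \<inter> (\<lambda>x. x \<otimes> b) ` (V \<inter> H) = {}"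
  proof (rule ccontr)
    assume "(V \<inter> H) \<inter> (\<lambda>x. x \<otimes> b) ` (V \<inter> H) \<noteq> {}"
    then obtain x where x: "x \<in> H" "x \<otimes> b \<in> H" by blast
    have xG: "x \<in> carrier G" using x HG by blast
    have "b = inv x \<otimes> (x \<otimes> b)" using xG bG by simp
    then have "b \<in> H" using x H by (metis subgroup.m_closed subgroup.m_inv_closed)
    then show False using b by blast
  qed
  have inj: "inj_on (\<lambda>x. x \<otimes> b) (V \<inter> H)"
  proof (rule inj_onI)
    fix x y assume "x \<in> V \<inter> H" "y \<in> V \<inter> H" "x \<otimes> b = y \<otimes> b"
    moreover then have "x \<in> carrier G" "y \<in> carrier G" using HG by blast+
    ultimately show "x = y" using bG by simp
  qed
  have fVH: "finite (V \<inter> H)" using fin VG by (meson finite_Int finite_subset)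
  have "card V = card (V \<inter> H) + card ((\<lambda>x. x \<otimes> b) ` (V \<inter> H))"
    by (subst Veq, rule card_Un_disjoint) (use fVH disj in auto)
  also have "\<dots> = 2 * card (V \<inter> H)" using card_image[OF inj] by simp
  finally show ?thesis .
qed

end

theorem proposition5p7:
  fixes G :: "('a, 'b) monoid_scheme" and U1 U2 N :: "'a set"
  assumes "group G" and "finite (carrier G)"
    and "subgroup U1 G" and "subgroup U2 G"
    and "almost_conjugate G U1 U2"
    and "N \<lhd> G"
    and "U1 \<subseteq> N" and "U2 \<subseteq> N"
    and "card (rcosets\<^bsub>G\<lparr>carrier := N\<rparr>\<^esub> U1) = 2"
    and "card (rcosets\<^bsub>G\<lparr>carrier := N\<rparr>\<^esub> U2) = 2"
  shows "conjugate_subgroups G U1 U2"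
proof (rule ccontr)
  assume nc: "\<not> conjugate_subgroups G U1 U2"
  interpret group G by fact
  have fin: "finite (carrier G)" by fact
  have U1G: "U1 \<subseteq> carrier G" using assms(3) subgroup.subset by blast
  have U2G: "U2 \<subseteq> carrier G" using assms(4) subgroup.subset by blast
  let ?F = "\<lambda>U x. card {g \<in> carrier G. g \<otimes>\<^bsub>G\<^esub> x \<otimes>\<^bsub>G\<^esub> inv\<^bsub>G\<^esub> g \<in> U}"
  have Feq: "?F U1 x = ?F U2 x" if x: "x \<in> carrier G" for x
  proof -
    have "conj_class G x \<in> conj_classes G" using x by (simp add: conj_classes_def)
    then have "card (U1 \<inter> conj_class G x) = card (U2 \<inter> conj_class G x)"
      using assms(5) by (simp add: almost_conjugate_def)
    then show ?thesis using F_formula[OF fin x U1G] F_formula[OF fin x U2G] by simp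
  qed
  have S: "(\<Sum>x\<in>A. ?F U x) = (\<Sum>g\<in>carrier G. card (A \<inter> W U g))"
    if A: "A \<subseteq> carrier G" for A U
  proof -
    have fA: "finite A" using A fin finite_subset by blast
    have "(\<Sum>x\<in>A. ?F U x) = (\<Sum>g\<in>carrier G. card {x\<in>A. g \<otimes>\<^bsub>G\<^esub> x \<otimes>\<^bsub>G\<^esub> inv\<^bsub>G\<^esub> g \<in> U})"
      by (rule card_swap_count[OF fA fin])
    also have "\<dots> = (\<Sum>g\<in>carrier G. card (A \<inter> W U g))"
    proof (rule sum.cong)
      fix g assume "g \<in> carrier G"
      have "{x\<in>A. g \<otimes>\<^bsub>G\<^esub> x \<otimes>\<^bsub>G\<^esub> inv\<^bsub>G\<^esub> g \<in> U} = A \<inter> W U g"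
        using A by (auto simp: W_def)
      then show "card {x\<in>A. g \<otimes>\<^bsub>G\<^esub> x \<otimes>\<^bsub>G\<^esub> inv\<^bsub>G\<^esub> g \<in> U} = card (A \<inter> W U g)"
        by simp
    qed simp
    finally show ?thesis .
  qed
  have "(\<Sum>g\<in>carrier G. card (carrier G \<inter> W U1 g)) = (\<Sum>g\<in>carrier G. card (carrier G \<inter> W U2 g))"
  proof -
    have "(\<Sum>x\<in>carrier G. ?F U1 x) = (\<Sum>x\<in>carrier G. ?F U2 x)"
      by (rule sum.cong) (simp_all add: Feq)
    then show ?thesis using S[of "carrier G" U1] S[of "carrier G" U2] by simp
  qed
  moreover have "carrier G \<inter> W U g = W U g" for U g by (auto simp: W_def)
  ultimately have "(\<Sum>g\<in>carrier G. card U1) = (\<Sum>g\<in>carrier G. card U2)"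
    using W_card U1G U2G by simp
  moreover have "card (carrier G) > 0" using fin one_closed by (auto simp: card_gt_0_iff)
  ultimately have cU: "card U1 = card U2" by simp
  have eqU1: "(\<Sum>g\<in>carrier G. card (U1 \<inter> W U1 g)) = (\<Sum>g\<in>carrier G. card (U1 \<inter> W U2 g))"
  proof -
    have "(\<Sum>x\<in>U1. ?F U1 x) = (\<Sum>x\<in>U1. ?F U2 x)"
      by (rule sum.cong) (use Feq U1G in auto)
    then show ?thesis using S[OF U1G, of U1] S[OF U1G, of U2] by simp
  qed
  have fU1: "finite U1" using fin U1G finite_subset by blast
  have pos: "card U1 > 0" using fU1 assms(3) subgroup.one_closed by (metis card_gt_0_iff empty_iff)
  have le2: "2 * card (U1 \<inter> W U2 g) = card U1" if g: "g \<in> carrier G" for g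
  proof -
    have ne: "W U2 g \<noteq> U1" using W_conj[OF U1G U2G g] nc by blast
    have cW: "card (W U2 g) = card U1" using W_card[OF U2G g] cU by simp
    have "\<not> W U2 g \<subseteq> U1" using card_subset_eq[OF fU1 _ cW] ne by blast
    then have "card (W U2 g) = 2 * card (W U2 g \<inter> U1)"
      using key[OF fin assms(6) assms(3) assms(7) assms(9) W_subgroup[OF assms(4) g]
          W_sub_N[OF assms(6) assms(8) g]] by blast
    then show ?thesis using cW by (simp add: Int_commute)
  qed
  have ge1: "card U1 \<le> 2 * card (U1 \<inter> W U1 g)" if g: "g \<in> carrier G" for g
  proof (cases "W U1 g \<subseteq> U1")
    case True
    then have "U1 \<inter> W U1 g = W U1 g" by blast
    then show ?thesis using W_card[OF U1G g] by simp
  next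
    case False
    then have "card (W U1 g) = 2 * card (W U1 g \<inter> U1)"
      using key[OF fin assms(6) assms(3) assms(7) assms(9) W_subgroup[OF assms(3) g]
          W_sub_N[OF assms(6) assms(7) g]] by blast
    then show ?thesis using W_card[OF U1G g] by (simp add: Int_commute)
  qed
  have "(\<Sum>g\<in>carrier G. 2 * card (U1 \<inter> W U2 g)) < (\<Sum>g\<in>carrier G. 2 * card (U1 \<inter> W U1 g))"
  proof (rule sum_strict_mono_ex1[OF fin])
    show "\<forall>x\<in>carrier G. 2 * card (U1 \<inter> W U2 x) \<le> 2 * card (U1 \<inter> W U1 x)"
      using le2 ge1 by simp
    have "U1 \<inter> W U1 \<one>\<^bsub>G\<^esub> = U1" using W_one[OF U1G] by simp
    then have "2 * card (U1 \<inter> W U2 \<one>\<^bsub>G\<^esub>) < 2 * card (U1 \<inter> W U1 \<one>\<^bsub>G\<^esub>)"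
      using le2[of "\<one>\<^bsub>G\<^esub>"] pos by simp
    then show "\<exists>a\<in>carrier G. 2 * card (U1 \<inter> W U2 a) < 2 * card (U1 \<inter> W U1 a)"
      by blast
  qed
  then show False using eqU1 by (simp add: sum_distrib_left[symmetric])
qed

end
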